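(* Let $J\ge5$ be an integer and $L\in\{2,\dots,J-1\}$. Let $\mathbb{A}$ be the $J\times J$ symmetric tridiagonal matrix with $\mathbb{A}_{11}=\mathbb{A}_{JJ}=1$, $\mathbb{A}_{jj}=2$ for $1<j<J$, $\mathbb{A}_{j,j+1}=\mathbb{A}_{j+1,j}=-1$ for $1\le j<J$, and all other entries zero. Let $D=\mathrm{diag}(d_1,\dots,d_J)$ with $d_L=-1$ and $d_j=2$ for $j\ne L$, and let $\mathbb{B}:=\mathbb{A}D$ (so $\mathbb{B}$ coincides with $2\mathbb{A}$ except in rows $L-1,L,L+1$, whose nonzero entries in columns $L-2,\dots,L+2$ are $2(-1,2,\tfrac12)$ in row $L-1$ (columns $L-2,L-1,L$), $2(-1,-1,-1)$ in row $L$ (columns $L-1,L,L+1$), and $2(\tfrac12,2,-1)$ in row $L+1$ (columns $L,L+1,L+2$)). Then $\mathbb{B}$ is diagonalizable over $\mathbb{R}$ with $J$ distinct eigenvalues, which can be ordered as $$-1<\mu_{-1}<\mu_0=0<\mu_1<\dots<\mu_{J-2}<8 .$$ In particular, $\mathbb{B}$ has exactly one negative eigenvalue. *)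

theory Defs
  imports "Jordan_Normal_Form.Char_Poly"
begin

(* Matrices are J x J, indexed 0..J-1; paper index j corresponds to i = j - 1. *)

definition A_mat :: "nat \<Rightarrow> real mat" where
  "A_mat J = mat J J (\<lambda>(i,j).
     if i = j then (if i = 0 \<or> i = J - 1 then 1 else 2)
     else if i = j + 1 \<or> j = i + 1 then -1 else 0)"

definition D_mat :: "nat \<Rightarrow> nat \<Rightarrow> real mat" where
  "D_mat J L = mat J J (\<lambda>(i,j). if i = j then (if i + 1 = L then -1 else 2) else 0)"

definition B_mat :: "nat \<Rightarrow> nat \<Rightarrow> real mat" where
  "B_mat J L = A_mat J * D_mat J L"

definition diagonalizable_real :: "real mat \<Rightarrow> bool" where
  "diagonalizable_real M \<longleftrightarrow>
     (\<exists>Dg. Dg \<in> carrier_mat (dim_row M) (dim_row M) \<and> diagonal_mat Dg \<and> similar_mat M Dg)"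

end

theory Submission
  imports Defs "Jordan_Normal_Form.Jordan_Normal_Form_Existence"
begin


fun jp :: "(nat \<Rightarrow> real) \<Rightarrow> (nat \<Rightarrow> real) \<Rightarrow> nat \<Rightarrow> real poly" where
  "jp a b 0 = 1"
| "jp a b (Suc 0) = [:-a 0, 1:]"
| "jp a b (Suc (Suc k)) = [:-a (Suc k), 1:] * jp a b (Suc k) - Polynomial.smult (b k) (jp a b k)"

lemma jp_deg: "degree (jp a b k) = k \<and> lead_coeff (jp a b k) = 1"
proof (induction a b k rule: jp.induct)
  case (3 a b k)
  let ?X = "[:-a (Suc k), 1:] * jp a b (Suc k)"
  let ?Y = "Polynomial.smult (b k) (jp a b k)"
  have nz: "jp a b (Suc k) \<noteq> 0" using 3 by (metis one_neq_zero leading_coeff_0_iff)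
  have "degree ?X = degree [:-a (Suc k), 1:] + degree (jp a b (Suc k))"
    by (rule degree_mult_eq) (use nz in auto)
  then have dX: "degree ?X = Suc (Suc k)" using 3 by simp
  have h1: "coeff (jp a b (Suc k)) (Suc k) = 1" using 3 by metis
  have lX: "lead_coeff ?X = 1" by (simp only: lead_coeff_mult) (use 3 h1 in simp)
  have dY: "degree ?Y < Suc (Suc k)" using 3 by simp
  have d: "degree (?X - ?Y) = Suc (Suc k)"
    using dX dY by (metis degree_add_eq_left degree_minus diff_conv_add_uminus)
  have h2: "coeff (jp a b k) (Suc (Suc k)) = 0" using 3 by (simp add: coeff_eq_0)
  have "coeff ?X (Suc (Suc k)) = 1" using lX dX by metis
  then have "coeff (?X - ?Y) (Suc (Suc k)) = 1"
    using h2 by (simp only: coeff_diff coeff_smult)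
  then show ?case using d by simp
qed auto

lemma jp_nz: "jp a b k \<noteq> 0"
  using jp_deg[of a b k] by (metis one_neq_zero leading_coeff_0_iff)

lemma jp_poly2: "poly (jp a b (Suc (Suc k))) x = (x - a (Suc k)) * poly (jp a b (Suc k)) x - b k * poly (jp a b k) x"
  by (simp add: algebra_simps)

lemma jp_fin: "finite {x. poly (jp a b k) x = 0}"
  by (rule poly_roots_finite[OF jp_nz])

lemma jp_card: "card {x. poly (jp a b k) x = 0} \<le> k"
  using card_poly_roots_bound[OF jp_nz, of a b k] jp_deg[of a b k] by simp

lemma monic_prod:
  fixes p :: "real poly"
  assumes d: "degree p = n" and l: "lead_coeff p = 1" and c: "card {x. poly p x = 0} = n"
  shows "p = (\<Prod>x\<in>{x. poly p x = 0}. [:-x, 1:])"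
proof -
  let ?R = "{x. poly p x = 0}"
  have pnz: "p \<noteq> 0" using l by auto
  have fin: "finite ?R" by (rule poly_roots_finite[OF pnz])
  let ?q = "(\<Prod>x\<in>?R. [:-x, 1:])"
  have dq: "degree ?q = n"
    using c by (subst degree_prod_eq_sum_degree) auto
  have lq: "lead_coeff ?q = 1" by (simp add: lead_coeff_prod)
  show ?thesis
  proof (rule poly_eqI_degree_lead_coeff[of p n ?q ?R])
    show "coeff p n = coeff ?q n" using d dq l lq by simp
    show "n \<le> card ?R" using c by simp
    show "degree p \<le> n" using d by simp
    show "degree ?q \<le> n" using dq by simp
    fix z assume "z \<in> ?R"
    then show "poly p z = poly ?q z" using fin by (auto simp: poly_prod)
  qed
qed

lemma prod_sign:
  fixes R :: "real set"
  assumes "finite R" "c \<notin> R"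
  shows "0 < (-1) ^ card {x\<in>R. c < x} * (\<Prod>x\<in>R. c - x)"
  using assms
proof (induction R rule: finite_induct)
  case empty
  then show ?case by simp
next
  case (insert y R)
  have IH: "0 < (-1) ^ card {x\<in>R. c < x} * (\<Prod>x\<in>R. c - x)" using insert by auto
  have fin: "finite {x\<in>R. c < x}" using insert by auto
  show ?case
  proof (cases "c < y")
    case True
    have "{x\<in>insert y R. c < x} = insert y {x\<in>R. c < x}" using True by auto
    then have e1: "card {x\<in>insert y R. c < x} = Suc (card {x\<in>R. c < x})" using fin insert by simp
    have e2: "(\<Prod>x\<in>insert y R. c - x) = (c - y) * (\<Prod>x\<in>R. c - x)"
      using insert by simp
    have "(-1) ^ card {x\<in>insert y R. c < x} * (\<Prod>x\<in>insert y R. c - x)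
       = ((-1) ^ card {x\<in>R. c < x} * (\<Prod>x\<in>R. c - x)) * (y - c)"
      by (simp only: e1 e2 power_Suc) (simp add: algebra_simps)
    then show ?thesis using IH True by simp
  next
    case False
    then have "c > y" using insert by (cases "c = y") auto
    have "{x\<in>insert y R. c < x} = {x\<in>R. c < x}" using False by auto
    then show ?thesis using insert \<open>c > y\<close> IH by (simp add: ac_simps)
  qed
qed

lemma monic_sign:
  fixes p :: "real poly"
  assumes d: "degree p = n" and l: "lead_coeff p = 1" and c: "card {x. poly p x = 0} = n"
    and pc: "poly p c \<noteq> 0"
  shows "0 < (-1) ^ card {x. poly p x = 0 \<and> c < x} * poly p c"
proof -
  let ?R = "{x. poly p x = 0}"
  have pnz: "p \<noteq> 0" using l by auto
  have fin: "finite ?R" by (rule poly_roots_finite[OF pnz])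
  have "poly p c = (\<Prod>x\<in>?R. c - x)"
    by (subst monic_prod[OF d l c]) (simp add: poly_prod)
  moreover have "{x. poly p x = 0 \<and> c < x} = {x\<in>?R. c < x}" by auto
  ultimately show ?thesis using prod_sign[OF fin] pc by auto
qed

definition rts :: "real poly \<Rightarrow> nat \<Rightarrow> (nat \<Rightarrow> real) \<Rightarrow> bool" where
  "rts p k r \<longleftrightarrow> (\<forall>i j. i < j \<longrightarrow> j < k \<longrightarrow> r i < r j) \<and> {x. poly p x = 0} = r ` {..<k}"

lemma rts_inj: "rts p k r \<Longrightarrow> inj_on r {..<k}"
  unfolding rts_def inj_on_def by (metis lessThan_iff linorder_neqE_nat order_less_irrefl)

lemma rts_card: "rts p k r \<Longrightarrow> card {x. poly p x = 0} = k"
  using rts_inj[of p k r] by (simp add: rts_def card_image)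

lemma rts_count: "rts p k r \<Longrightarrow> card {x. poly p x = 0 \<and> P x} = card {i. i < k \<and> P (r i)}"
proof -
  assume h: "rts p k r"
  have "{x. poly p x = 0 \<and> P x} = r ` {i. i < k \<and> P (r i)}"
    using h unfolding rts_def by auto
  moreover have "inj_on r {i. i < k \<and> P (r i)}"
    using rts_inj[OF h] by (rule inj_on_subset) auto
  ultimately show ?thesis by (simp add: card_image)
qed

lemma rts_mono: "rts p k r \<Longrightarrow> i \<le> j \<Longrightarrow> j < k \<Longrightarrow> r i \<le> r j"
  unfolding rts_def by (metis order_le_less order.refl)

lemma monic_pinf:
  fixes p :: "real poly"
  assumes "lead_coeff p = 1"
  shows "\<exists>x\<ge>c. 0 < poly p x"
proof -
  obtain n where "\<forall>x\<ge>n. poly p x \<ge> lead_coeff p" using poly_pinfty_gt_lc[of p] assms by auto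
  then have "poly p (max n c) \<ge> 1" using assms by auto
  then show ?thesis by (intro exI[of _ "max n c"]) auto
qed

lemma monic_minf:
  fixes p :: "real poly"
  assumes "lead_coeff p = 1" "degree p = n"
  shows "\<exists>x\<le>c. 0 < (-1) ^ n * poly p x"
proof -
  let ?q = "Polynomial.smult ((-1) ^ n) (pcompose p [:0, -1:])"
  have "lead_coeff (pcompose p [:0, -1:]) = (-1) ^ n"
    using assms by (subst lead_coeff_comp) auto
  then have "lead_coeff ?q = 1" by (simp flip: power_mult_distrib)
  then obtain x where x: "x \<ge> - c" "0 < poly ?q x" using monic_pinf by blast
  have "poly ?q x = (-1) ^ n * poly p (- x)" by (simp add: poly_pcompose)
  then show ?thesis using x by (intro exI[of _ "- x"]) auto
qed

lemma interlace:
  assumes bpos: "\<And>k. b k > 0"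
  shows "\<exists>r q. rts (jp a b (Suc m)) (Suc m) r \<and> rts (jp a b m) m q
     \<and> (\<forall>i. Suc i < Suc m \<longrightarrow> r i < q i \<and> q i < r (Suc i))"
proof (induction m)
  case 0
  have "rts (jp a b (Suc 0)) (Suc 0) (\<lambda>_. a 0)" unfolding rts_def by auto
  moreover have "rts (jp a b 0) 0 (\<lambda>_. 0)" unfolding rts_def by auto
  ultimately show ?case by auto
next
  case (Suc m)
  define k where "k = Suc m"
  obtain r q where r: "rts (jp a b k) k r" and q: "rts (jp a b m) m q"
    and il: "\<And>i. Suc i < k \<Longrightarrow> r i < q i \<and> q i < r (Suc i)"
    using Suc.IH unfolding k_def by blast
  let ?P = "jp a b (Suc k)"
  let ?Q = "jp a b m"
  have degP: "degree ?P = Suc k" and lcP: "lead_coeff ?P = 1" using jp_deg[of a b "Suc k"] by blast+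
  have degQ: "degree ?Q = m" and lcQ: "lead_coeff ?Q = 1" using jp_deg[of a b m] by blast+
  have rk: "\<And>i. i < k \<Longrightarrow> poly (jp a b k) (r i) = 0" using r unfolding rts_def by auto
  have sgn_r: "0 < (-1) ^ (k - i) * poly ?P (r i)" if i: "i < k" for i
  proof -
    have nq: "poly ?Q (r i) \<noteq> 0"
    proof
      assume "poly ?Q (r i) = 0"
      then have "r i \<in> q ` {..<m}" using q unfolding rts_def by blast
      then obtain j where j: "j < m" "r i = q j" by auto
      show False
      proof (cases "j < i")
        case True
        then have "q j < r (Suc j)" using il[of j] j k_def by auto
        moreover have "r (Suc j) \<le> r i" using rts_mono[OF r, of "Suc j" i] True i by auto
        ultimately show False using j by auto
      next
        case False
        then have "r j < q j" using il[of j] j k_def by auto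
        moreover have "r i \<le> r j" using rts_mono[OF r, of i j] False j k_def by auto
        ultimately show False using j by auto
      qed
    qed
    have cnt: "{j. j < m \<and> r i < q j} = {i..<m}"
    proof (intro Set.set_eqI iffI)
      fix j assume "j \<in> {j. j < m \<and> r i < q j}"
      then have j: "j < m" "r i < q j" by auto
      have "\<not> j < i"
      proof
        assume ji: "j < i"
        then have "q j < r (Suc j)" using il[of j] j k_def by auto
        moreover have "r (Suc j) \<le> r i" using rts_mono[OF r, of "Suc j" i] ji i by auto
        ultimately show False using j by auto
      qed
      then show "j \<in> {i..<m}" using j by auto
    next
      fix j assume "j \<in> {i..<m}"
      then have j: "i \<le> j" "j < m" by auto
      then have "r j < q j" using il[of j] k_def by auto
      moreover have "r i \<le> r j" using rts_mono[OF r, of i j] j k_def by auto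
      ultimately show "j \<in> {j. j < m \<and> r i < q j}" using j by auto
    qed
    have "0 < (-1) ^ card {x. poly ?Q x = 0 \<and> r i < x} * poly ?Q (r i)"
      by (rule monic_sign[OF degQ lcQ rts_card[OF q] nq])
    moreover have "card {x. poly ?Q x = 0 \<and> r i < x} = m - i"
      using rts_count[OF q, of "\<lambda>x. r i < x"] cnt by simp
    ultimately have sQ: "0 < (-1) ^ (m - i) * poly ?Q (r i)" by simp
    have "poly ?P (r i) = - b m * poly ?Q (r i)"
      using rk[OF i] unfolding k_def by (simp only: jp_poly2)
    moreover have "(-1::real) ^ (k - i) = - ((-1) ^ (m - i))"
      using i k_def by (simp add: Suc_diff_le)
    ultimately have "(-1) ^ (k - i) * poly ?P (r i) = b m * ((-1) ^ (m - i) * poly ?Q (r i))"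
      by simp
    then show ?thesis using sQ bpos[of m] by simp
  qed
  obtain xm where xm: "xm \<le> r 0 - 1" "0 < (-1) ^ Suc k * poly ?P xm"
    using monic_minf[OF lcP degP] by blast
  obtain xp where xp: "xp \<ge> r (k - 1) + 1" "0 < poly ?P xp"
    using monic_pinf[OF lcP] by blast
  define e where "e j = (if j = 0 then xm else if j \<le> k then r (j - 1) else xp)" for j
  have kpos: "0 < k" using k_def by simp
  have r0: "\<And>i. i < k \<Longrightarrow> r 0 \<le> r i" using rts_mono[OF r] by auto
  have rk1: "\<And>i. i < k \<Longrightarrow> r i \<le> r (k - 1)" using rts_mono[OF r] by auto
  have emono: "e i < e j" if "i < j" "j \<le> Suc k" for i j
  proof -
    note h = that
    consider "i = 0" "j \<le> k" | "i = 0" "j = Suc k" | "0 < i" "j \<le> k" | "0 < i" "j = Suc k"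
      using h by (metis gr0I le_SucE)
    then show ?thesis
    proof cases
      case 1
      then have "j - 1 < k" "0 < j" using h by linarith+
      then show ?thesis using 1 xm r0[of "j - 1"] unfolding e_def by auto
    next
      case 2 then show ?thesis using xm xp r0[of "k - 1"] kpos unfolding e_def by auto
    next
      case 3 then show ?thesis using that r unfolding e_def rts_def by auto
    next
      case 4
      then have "i - 1 < k" using h by linarith
      then show ?thesis using 4 h xp rk1[of "i - 1"] unfolding e_def by auto
    qed
  qed
  have esgn: "0 < (-1) ^ (Suc k - j) * poly ?P (e j)" if "j \<le> Suc k" for j
  proof -
    note h = that
    consider "j = 0" | "0 < j" "j \<le> k" | "j = Suc k" using h by (metis gr0I le_SucE)
    then show ?thesis
    proof cases
      case 1 then show ?thesis using xm unfolding e_def by simp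
    next
      case 2
      then have "Suc k - j = k - (j - 1)" by simp
      then show ?thesis using 2 sgn_r[of "j - 1"] unfolding e_def by simp
    next
      case 3 then show ?thesis using xp unfolding e_def by simp
    qed
  qed
  have ivt: "\<exists>x. e j < x \<and> x < e (Suc j) \<and> poly ?P x = 0" if "j \<le> k" for j
  proof -
    define u where "u = ((-1::real) ^ (k - j))"
    have u2: "u * u = 1" unfolding u_def by (simp flip: power_add add: power_mult_distrib)
    have "(-1::real) ^ (Suc k - j) = - u" unfolding u_def using that by (simp add: Suc_diff_le)
    then have s1: "0 < - u * poly ?P (e j)" using esgn[of j] that by simp
    have s2: "0 < u * poly ?P (e (Suc j))" using esgn[of "Suc j"] that unfolding u_def by simp
    have "0 < (- u * poly ?P (e j)) * (u * poly ?P (e (Suc j)))" using s1 s2 by (rule mult_pos_pos)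
    also have "\<dots> = - (u * u) * (poly ?P (e j) * poly ?P (e (Suc j)))" by (simp add: algebra_simps)
    finally have "poly ?P (e j) * poly ?P (e (Suc j)) < 0" using u2 by simp
    then show ?thesis using poly_IVT[of "e j" "e (Suc j)" ?P] emono[of j "Suc j"] that by auto
  qed
  define s where "s j = (SOME x. e j < x \<and> x < e (Suc j) \<and> poly ?P x = 0)" for j
  have s: "e j < s j \<and> s j < e (Suc j) \<and> poly ?P (s j) = 0" if "j \<le> k" for j
    unfolding s_def by (rule someI_ex[OF ivt[OF that]])
  have smono: "\<forall>i j. i < j \<longrightarrow> j < Suc k \<longrightarrow> s i < s j"
  proof (intro allI impI)
    fix i j assume ij: "i < j" "j < Suc k"
    have "s i < e (Suc i)" using s[of i] ij by auto
    also have "e (Suc i) \<le> e j" using emono[of "Suc i" j] ij by (cases "Suc i = j") auto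
    also have "e j < s j" using s[of j] ij by auto
    finally show "s i < s j" .
  qed
  have sub: "s ` {..<Suc k} \<subseteq> {x. poly ?P x = 0}" using s by auto
  have injs: "inj_on s {..<Suc k}"
    unfolding inj_on_def by (metis lessThan_iff linorder_neqE_nat order_less_irrefl smono)
  have "card (s ` {..<Suc k}) = Suc k" using injs by (simp add: card_image)
  moreover have "card {x. poly ?P x = 0} \<le> Suc k" using jp_card[of a b "Suc k"] .
  ultimately have "s ` {..<Suc k} = {x. poly ?P x = 0}"
    using sub jp_fin by (metis card_seteq)
  then have rs: "rts ?P (Suc k) s" unfolding rts_def using smono by auto
  have il2: "\<forall>i. Suc i < Suc k \<longrightarrow> s i < r i \<and> r i < s (Suc i)"
  proof (intro allI impI)
    fix i assume "Suc i < Suc k"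
    then have "i < k" by simp
    then have "e (Suc i) = r i" unfolding e_def by simp
    then show "s i < r i \<and> r i < s (Suc i)" using s[of i] s[of "Suc i"] \<open>i < k\<close> by auto
  qed
  show ?case using rs r il2 unfolding k_def by blast
qed

definition Nc :: "(nat \<Rightarrow> real) \<Rightarrow> (nat \<Rightarrow> real) \<Rightarrow> nat \<Rightarrow> real \<Rightarrow> nat" where
  "Nc a b k c = card {x. poly (jp a b k) x = 0 \<and> x < c}"

lemma jp_card_eq:
  assumes bpos: "\<And>k. b k > 0"
  shows "card {x. poly (jp a b k) x = 0} = k"
proof (cases k)
  case 0
  then show ?thesis by simp
next
  case (Suc m)
  then show ?thesis using interlace[of b a m, OF bpos] rts_card by blast
qed

lemma Nc_le: "Nc a b k c \<le> k"
proof -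
  have "Nc a b k c \<le> card {x. poly (jp a b k) x = 0}"
    unfolding Nc_def by (rule card_mono[OF jp_fin]) auto
  then show ?thesis using jp_card[of a b k] by simp
qed

lemma Nc_step:
  assumes bpos: "\<And>k. b k > 0"
  shows "Nc a b k c \<le> Nc a b (Suc k) c \<and> Nc a b (Suc k) c \<le> Suc (Nc a b k c)"
proof -
  obtain r q where r: "rts (jp a b (Suc k)) (Suc k) r" and q: "rts (jp a b k) k q"
    and il: "\<And>i. Suc i < Suc k \<Longrightarrow> r i < q i \<and> q i < r (Suc i)"
    using interlace[of b a k, OF bpos] by blast
  have e1: "Nc a b (Suc k) c = card {i. i < Suc k \<and> r i < c}"
    unfolding Nc_def by (rule rts_count[OF r])
  have e2: "Nc a b k c = card {i. i < k \<and> q i < c}"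
    unfolding Nc_def by (rule rts_count[OF q])
  have "{i. i < k \<and> q i < c} \<subseteq> {i. i < Suc k \<and> r i < c}"
  proof
    fix i assume i: "i \<in> {i. i < k \<and> q i < c}"
    then have "r i < q i" using il[of i] by simp
    then show "i \<in> {i. i < Suc k \<and> r i < c}" using i by simp
  qed
  then have c1: "Nc a b k c \<le> Nc a b (Suc k) c" unfolding e1 e2 by (intro card_mono) auto
  have "{i. i < Suc k \<and> r i < c} \<subseteq> insert 0 (Suc ` {i. i < k \<and> q i < c})"
  proof
    fix i assume i: "i \<in> {i. i < Suc k \<and> r i < c}"
    show "i \<in> insert 0 (Suc ` {i. i < k \<and> q i < c})"
    proof (cases i)
      case (Suc j)
      then have "q j < r i" "j < k" using il[of j] i by auto
      then show ?thesis using i Suc by auto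
    qed simp
  qed
  then have "card {i. i < Suc k \<and> r i < c} \<le> card (insert 0 (Suc ` {i. i < k \<and> q i < c}))"
    by (intro card_mono) auto
  also have "\<dots> \<le> Suc (card (Suc ` {i. i < k \<and> q i < c}))" by (rule card_insert_le_m1) auto
  also have "\<dots> \<le> Suc (card {i. i < k \<and> q i < c})"
    using card_image_le[of "{i. i < k \<and> q i < c}" Suc] by simp
  finally show ?thesis using c1 unfolding e1 e2 by simp
qed

lemma Nc_sign:
  assumes bpos: "\<And>k. b k > 0" and pc: "poly (jp a b k) c \<noteq> 0"
  shows "0 < (-1) ^ (k - Nc a b k c) * poly (jp a b k) c"
proof -
  let ?R = "{x. poly (jp a b k) x = 0}"
  have ck: "card ?R = k" by (rule jp_card_eq[OF bpos])
  have d: "degree (jp a b k) = k" and l: "lead_coeff (jp a b k) = 1" using jp_deg[of a b k] by blast+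
  have s: "0 < (-1) ^ card {x. poly (jp a b k) x = 0 \<and> c < x} * poly (jp a b k) c"
    by (rule monic_sign[OF d l ck pc])
  let ?A = "{x. poly (jp a b k) x = 0 \<and> c < x}"
  let ?B = "{x. poly (jp a b k) x = 0 \<and> x < c}"
  have RAB: "?R = ?A \<union> ?B"
  proof (intro Set.set_eqI iffI)
    fix x assume x: "x \<in> ?R"
    then have "x \<noteq> c" using pc by auto
    then show "x \<in> ?A \<union> ?B" using x by (cases "x < c") auto
  qed auto
  have fA: "finite ?A" using jp_fin[of a b k] by (rule finite_subset[rotated]) auto
  have fB: "finite ?B" using jp_fin[of a b k] by (rule finite_subset[rotated]) auto
  have "card (?A \<union> ?B) = card ?A + card ?B"
    by (rule card_Un_disjoint[OF fA fB]) auto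
  then have "card ?R = card ?A + Nc a b k c" unfolding Nc_def RAB[symmetric] .
  then have "card {x. poly (jp a b k) x = 0 \<and> c < x} = k - Nc a b k c" using ck by simp
  then show ?thesis using s by simp
qed

lemma Nc_par:
  assumes bpos: "\<And>k. b k > 0" and pc: "poly (jp a b k) c \<noteq> 0"
  shows "(0 < (-1) ^ k * poly (jp a b k) c) = even (Nc a b k c)"
proof -
  let ?N = "Nc a b k c"
  have s: "0 < (-1) ^ (k - ?N) * poly (jp a b k) c" by (rule Nc_sign[OF bpos pc])
  have "k = (k - ?N) + ?N" using Nc_le[of a b k c] by simp
  then have "(-1::real) ^ k = (-1) ^ (k - ?N) * (-1) ^ ?N" by (metis power_add)
  then have eq: "(-1::real) ^ k * poly (jp a b k) c = (-1) ^ ?N * ((-1) ^ (k - ?N) * poly (jp a b k) c)"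
    by simp
  then show ?thesis
  proof (cases "even ?N")
    case True
    then have h1: "(-1::real) ^ ?N = 1" by simp
    have e2: "(-1::real) ^ k * poly (jp a b k) c = (-1) ^ (k - ?N) * poly (jp a b k) c"
      by (subst eq, subst h1) simp
    show ?thesis unfolding e2 using s True by simp
  next
    case False
    then have h1: "(-1::real) ^ ?N = -1" by simp
    have e2: "(-1::real) ^ k * poly (jp a b k) c = - ((-1) ^ (k - ?N) * poly (jp a b k) c)"
      by (subst eq, subst h1) simp
    show ?thesis unfolding e2 using s False by simp
  qed
qed

lemma Nc_zero:
  assumes bpos: "\<And>k. b k > 0" and h: "\<And>j. j \<le> k \<Longrightarrow> 0 < (-1) ^ j * poly (jp a b j) c"
  shows "Nc a b k c = 0"
  using h
proof (induction k)
  case 0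
  then show ?case using Nc_le[of a b 0 c] by simp
next
  case (Suc k)
  have "Nc a b k c = 0" using Suc by auto
  then have le: "Nc a b (Suc k) c \<le> 1" using Nc_step[of b a k c, OF bpos] by simp
  have hk: "0 < (-1) ^ Suc k * poly (jp a b (Suc k)) c" using Suc.prems by blast
  then have pc: "poly (jp a b (Suc k)) c \<noteq> 0" by auto
  have "even (Nc a b (Suc k) c)" using Nc_par[OF bpos pc] hk by blast
  then show ?case using le by (metis One_nat_def le_SucE le_zero_eq odd_one)
qed

lemma Nc_full:
  assumes bpos: "\<And>k. b k > 0" and h: "\<And>j. j \<le> k \<Longrightarrow> 0 < poly (jp a b j) c"
  shows "Nc a b k c = k"
  using h
proof (induction k)
  case 0
  then show ?case using Nc_le[of a b 0 c] by simp
next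
  case (Suc k)
  have "Nc a b k c = k" using Suc by auto
  then have ge: "k \<le> Nc a b (Suc k) c" using Nc_step[of b a k c, OF bpos] by simp
  have hk: "0 < poly (jp a b (Suc k)) c" using Suc.prems by blast
  then have pc: "poly (jp a b (Suc k)) c \<noteq> 0" by simp
  have "(0 < (-1) ^ Suc k * poly (jp a b (Suc k)) c) = even (Nc a b (Suc k) c)"
    by (rule Nc_par[OF bpos pc])
  moreover have "(0 < (-1) ^ Suc k * poly (jp a b (Suc k)) c) = odd k"
  proof (cases "even k")
    case True
    then have "(-1::real) ^ Suc k = -1" by simp
    then show ?thesis using hk True by simp
  next
    case False
    then have "(-1::real) ^ Suc k = 1" by simp
    then show ?thesis using hk False by simp
  qed
  ultimately have "Nc a b (Suc k) c \<noteq> k" by auto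
  then show ?case using ge Nc_le[of a b "Suc k" c] by linarith
qed



definition dd :: "nat \<Rightarrow> nat \<Rightarrow> real" where
  "dd L i = (if i + 1 = L then -1 else 2)"
definition aa :: "nat \<Rightarrow> nat \<Rightarrow> real" where
  "aa L j = dd L j + dd L (Suc j)"
definition bb :: "nat \<Rightarrow> nat \<Rightarrow> real" where
  "bb L j = (dd L (Suc j))^2"

abbreviation PP :: "nat \<Rightarrow> nat \<Rightarrow> real poly" where
  "PP L k \<equiv> jp (aa L) (bb L) k"

lemma bb_pos: "bb L j > 0"
  unfolding bb_def dd_def by simp

lemma PP2: "poly (PP L (Suc (Suc k))) x = (x - aa L (Suc k)) * poly (PP L (Suc k)) x - bb L k * poly (PP L k) x"
  by (rule jp_poly2)

lemma at8: "0 < poly (PP L k) 8 \<and> 2 * poly (PP L k) 8 \<le> poly (PP L (Suc k)) 8"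
proof (induction k)
  case 0
  then show ?case unfolding aa_def dd_def by auto
next
  case (Suc k)
  define x where "x = poly (PP L k) 8"
  define y where "y = poly (PP L (Suc k)) 8"
  have xy: "0 < x" "2 * x \<le> y" using Suc unfolding x_def y_def by auto
  have z: "poly (PP L (Suc (Suc k))) 8 = (8 - aa L (Suc k)) * y - bb L k * x"
    unfolding x_def y_def by (rule PP2)
  consider "L = k + 2" | "L = k + 3" | "L \<noteq> k + 2" "L \<noteq> k + 3" by blast
  then have "2 * y \<le> poly (PP L (Suc (Suc k))) 8"
  proof cases
    case 1 then show ?thesis using xy unfolding z aa_def bb_def dd_def by simp
  next
    case 2 then show ?thesis using xy unfolding z aa_def bb_def dd_def by simp
  next
    case 3 then show ?thesis using xy unfolding z aa_def bb_def dd_def by simp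
  qed
  then show ?case using xy unfolding y_def by simp
qed

lemma um1_rec: "(-1) ^ Suc (Suc k) * poly (PP L (Suc (Suc k))) (-1)
   = (1 + aa L (Suc k)) * ((-1) ^ Suc k * poly (PP L (Suc k)) (-1)) - bb L k * ((-1) ^ k * poly (PP L k) (-1))"
  by (simp only: PP2) (simp add: algebra_simps)

lemma atm1:
  assumes L: "2 \<le> L"
  shows "0 < (-1) ^ k * poly (PP L k) (-1) \<and> (-1) ^ k * poly (PP L k) (-1) \<le> (-1) ^ Suc k * poly (PP L (Suc k)) (-1)
    \<and> (k + 2 < L \<longrightarrow> 4 * ((-1) ^ k * poly (PP L k) (-1)) \<le> (-1) ^ Suc k * poly (PP L (Suc k)) (-1))"
proof (induction k)
  case 0
  then show ?case using L unfolding aa_def dd_def by auto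
next
  case (Suc k)
  define x where "x = (-1) ^ k * poly (PP L k) (-1)"
  define y where "y = (-1) ^ Suc k * poly (PP L (Suc k)) (-1)"
  have xy: "0 < x" "x \<le> y" "k + 2 < L \<longrightarrow> 4 * x \<le> y" using Suc unfolding x_def y_def by auto
  have z: "(-1) ^ Suc (Suc k) * poly (PP L (Suc (Suc k))) (-1) = (1 + aa L (Suc k)) * y - bb L k * x"
    unfolding x_def y_def by (rule um1_rec)
  consider "L = k + 2" | "L = k + 3" | "L \<noteq> k + 2" "L \<noteq> k + 3" by blast
  then have "y \<le> (-1) ^ Suc (Suc k) * poly (PP L (Suc (Suc k))) (-1)
     \<and> (Suc k + 2 < L \<longrightarrow> 4 * y \<le> (-1) ^ Suc (Suc k) * poly (PP L (Suc (Suc k))) (-1))"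
  proof cases
    case 1 then show ?thesis using xy unfolding z aa_def bb_def dd_def by simp
  next
    case 2 then show ?thesis using xy unfolding z aa_def bb_def dd_def by simp
  next
    case 3 then show ?thesis using xy unfolding z aa_def bb_def dd_def by auto
  qed
  then show ?case using xy unfolding y_def by simp
qed

definition F0 :: "nat \<Rightarrow> nat \<Rightarrow> real" where
  "F0 L k = (if k + 1 < L then (-2) ^ k * (real k + 1) else (-2) ^ (k - 1) * (real k - 2))"

lemma at0_pair:
  assumes L: "2 \<le> L"
  shows "poly (PP L k) 0 = F0 L k \<and> poly (PP L (Suc k)) 0 = F0 L (Suc k)"
proof (induction k)
  case 0
  show ?case
  proof (cases "L = 2")
    case True then show ?thesis unfolding F0_def aa_def dd_def by simp
  next
    case False then show ?thesis using L unfolding F0_def aa_def dd_def by simp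
  qed
next
  case (Suc k)
  have x: "poly (PP L k) 0 = F0 L k" and y: "poly (PP L (Suc k)) 0 = F0 L (Suc k)" using Suc by auto
  have z: "poly (PP L (Suc (Suc k))) 0 = (0 - aa L (Suc k)) * F0 L (Suc k) - bb L k * F0 L k"
    unfolding x[symmetric] y[symmetric] by (rule PP2)
  consider "k + 3 < L" | "L = k + 3" | "L = k + 2" | "L < k + 2" by linarith
  then have "poly (PP L (Suc (Suc k))) 0 = F0 L (Suc (Suc k))"
  proof cases
    case 1
    then show ?thesis unfolding z aa_def bb_def dd_def F0_def
      by (simp add: algebra_simps)
  next
    case 2
    then show ?thesis unfolding z aa_def bb_def dd_def F0_def
      by (simp add: algebra_simps)
  next
    case 3
    then have k1: "k \<ge> 0" by simp
    show ?thesis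
    proof (cases k)
      case 0 then show ?thesis using 3 unfolding z aa_def bb_def dd_def F0_def by simp
    next
      case (Suc j)
      then show ?thesis using 3 unfolding z aa_def bb_def dd_def F0_def
        by (simp add: algebra_simps)
    qed
  next
    case 4
    then obtain j where j: "k = Suc j" using L by (cases k) auto
    show ?thesis using 4 j unfolding z aa_def bb_def dd_def F0_def
      by (simp add: algebra_simps)
  qed
  then show ?case using y by simp
qed

lemma at0: "2 \<le> L \<Longrightarrow> poly (PP L k) 0 = F0 L k"
  using at0_pair by blast

lemma N_m1: "2 \<le> L \<Longrightarrow> Nc (aa L) (bb L) k (-1) = 0"
  by (rule Nc_zero[OF bb_pos]) (use atm1 in blast)

lemma N_8: "Nc (aa L) (bb L) k 8 = k"
  by (rule Nc_full[OF bb_pos]) (use at8 in blast)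

lemma N_0:
  assumes L: "2 \<le> L" and Ln: "L \<le> n" and n3: "3 \<le> n"
  shows "Nc (aa L) (bb L) n 0 = 1 \<and> poly (PP L n) 0 \<noteq> 0"
proof -
  define K0 where "K0 = max (L - 2) 1"
  have pos: "0 < (-1) ^ j * poly (PP L j) 0" if j: "j \<le> K0" for j
  proof (cases "j + 1 < L")
    case True
    have "(-1) ^ j * poly (PP L j) 0 = ((-1) * (-2)) ^ j * (real j + 1)"
      using True L unfolding at0[OF L] F0_def by (simp add: power_mult_distrib[symmetric])
    then show ?thesis by simp
  next
    case False
    then have "L = 2" "j = 1" using j L unfolding K0_def by auto
    then show ?thesis unfolding at0[OF L] F0_def by simp
  qed
  have neg: "(-1) ^ j * poly (PP L j) 0 < 0" if j: "K0 + 2 \<le> j" for j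
  proof -
    obtain i where i: "j = Suc i" using j by (cases j) auto
    have "\<not> j + 1 < L" using j unfolding K0_def by auto
    then have "(-1) ^ j * poly (PP L j) 0 = - (((-1) * (-2)) ^ i * (real j - 2))"
      unfolding at0[OF L] F0_def i by (simp add: power_mult_distrib[symmetric])
    moreover have "real j - 2 > 0" using j unfolding K0_def by auto
    ultimately show ?thesis by simp
  qed
  have NK0: "Nc (aa L) (bb L) K0 0 = 0"
    by (rule Nc_zero[OF bb_pos]) (use pos in blast)
  have main: "Nc (aa L) (bb L) k 0 \<le> 1 \<and> (K0 + 2 \<le> k \<longrightarrow> Nc (aa L) (bb L) k 0 = 1)"
    if k: "Suc K0 \<le> k" for k
    using k
  proof (induction k rule: dec_induct)
    case base
    then show ?case using Nc_step[of "bb L" "aa L" K0 0, OF bb_pos] NK0 by simp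
  next
    case (step k)
    have le: "Nc (aa L) (bb L) (Suc k) 0 \<le> 2" using step.IH Nc_step[of "bb L" "aa L" k 0, OF bb_pos] by simp
    have "K0 + 2 \<le> Suc k" using step.hyps(1) by simp
    then have ng: "(-1) ^ Suc k * poly (PP L (Suc k)) 0 < 0" by (rule neg)
    then have pc: "poly (PP L (Suc k)) 0 \<noteq> 0" by auto
    have "odd (Nc (aa L) (bb L) (Suc k) 0)" using Nc_par[of "bb L" "aa L" "Suc k" 0, OF bb_pos pc] ng by simp
    then have "0 < Nc (aa L) (bb L) (Suc k) 0" "Nc (aa L) (bb L) (Suc k) 0 \<noteq> 2"
      by (auto intro: odd_pos)
    then have "Nc (aa L) (bb L) (Suc k) 0 = 1" using le by linarith
    then show ?case by simp
  qed
  have nK: "K0 + 2 \<le> n" using L Ln n3 unfolding K0_def by auto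
  show ?thesis using main[of n] nK neg[OF nK] by auto
qed

lemma roots_struct:
  assumes L: "2 \<le> L" and Ln: "L \<le> n" and n3: "3 \<le> n"
  shows "\<exists>r. rts (PP L n) n r \<and> -1 < r 0 \<and> r 0 < 0 \<and> (\<forall>i. 1 \<le> i \<longrightarrow> i < n \<longrightarrow> 0 < r i \<and> r i < 8)"
proof -
  obtain m where nm: "n = Suc m" using n3 by (cases n) auto
  obtain r where r: "rts (PP L n) n r"
    using interlace[of "bb L" "aa L" m, OF bb_pos] nm by blast
  have rmono: "\<And>i j. i \<le> j \<Longrightarrow> j < n \<Longrightarrow> r i \<le> r j" using rts_mono[OF r] by blast
  have rstrict: "\<And>i j. i < j \<Longrightarrow> j < n \<Longrightarrow> r i < r j" using r unfolding rts_def by blast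
  have rroot: "\<And>i. i < n \<Longrightarrow> poly (PP L n) (r i) = 0" using r unfolding rts_def by blast
  have c1: "card {i. i < n \<and> r i < -1} = 0"
    using N_m1[OF L, of n] rts_count[OF r, of "\<lambda>x. x < -1"] unfolding Nc_def by simp
  have pm1: "poly (PP L n) (-1) \<noteq> 0" using atm1[OF L, of n] by auto
  have gm1: "-1 < r i" if "i < n" for i
  proof -
    have "\<not> r i < -1" using c1 that by auto
    moreover have "r i \<noteq> -1" using rroot[OF that] pm1 by auto
    ultimately show ?thesis by simp
  qed
  have c8: "card {i. i < n \<and> r i < 8} = n"
    using N_8[of L n] rts_count[OF r, of "\<lambda>x. x < 8"] unfolding Nc_def by simp
  have l8: "r i < 8" if "i < n" for i
  proof -
    have "{i. i < n \<and> r i < 8} = {..<n}"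
      by (rule card_subset_eq) (use c8 in auto)
    then show ?thesis using that by auto
  qed
  have N0: "Nc (aa L) (bb L) n 0 = 1" and p0: "poly (PP L n) 0 \<noteq> 0" using N_0[OF L Ln n3] by auto
  have c0: "card {i. i < n \<and> r i < 0} = 1"
    using N0 rts_count[OF r, of "\<lambda>x. x < 0"] unfolding Nc_def by simp
  have r0: "r 0 < 0"
  proof (rule ccontr)
    assume "\<not> r 0 < 0"
    then have e: "{i. i < n \<and> r i < 0} = {}" using rmono[of 0] by force
    show False using c0 unfolding e by simp
  qed
  have r1: "0 < r 1"
  proof (rule ccontr)
    assume "\<not> 0 < r 1"
    moreover have "r 1 \<noteq> 0" using rroot[of 1] p0 n3 by auto
    ultimately have "r 1 < 0" by simp
    then have "{0, 1} \<subseteq> {i. i < n \<and> r i < 0}" using r0 n3 by auto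
    then have "card {0::nat, 1} \<le> card {i. i < n \<and> r i < 0}" by (rule card_mono[rotated]) auto
    then show False using c0 by simp
  qed
  have "\<forall>i. 1 \<le> i \<longrightarrow> i < n \<longrightarrow> 0 < r i \<and> r i < 8"
    using r1 rmono[of 1] l8 by (meson less_le_trans)
  then show ?thesis using r gm1[of 0] r0 n3 by auto
qed



lemma B_dims: "B_mat J L \<in> carrier_mat J J"
  unfolding B_mat_def A_mat_def D_mat_def by auto

lemma B_entry:
  assumes "i < J" "k < J"
  shows "B_mat J L $$ (i,k) = A_mat J $$ (i,k) * dd L k"
proof -
  have "B_mat J L $$ (i,k) = (\<Sum>l\<in>{0..<J}. A_mat J $$ (i,l) * D_mat J L $$ (l,k))"
    using assms unfolding B_mat_def by (simp add: scalar_prod_def A_mat_def D_mat_def)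
  also have "\<dots> = (\<Sum>l\<in>{0..<J}. if l = k then A_mat J $$ (i,k) * dd L k else 0)"
    using assms by (intro sum.cong) (auto simp: D_mat_def dd_def)
  also have "\<dots> = A_mat J $$ (i,k) * dd L k" using assms by simp
  finally show ?thesis .
qed

lemma A_row_sum:
  assumes J: "2 \<le> J" and i: "i < J"
  shows "(\<Sum>l\<in>{0..<J}. A_mat J $$ (i,l) * f l) =
    (if i = 0 then f 0 - f 1 else if i = J - 1 then f i - f (i - 1) else 2 * f i - f (i - 1) - f (i + 1))"
proof -
  define c :: real where "c = (if i = 0 \<or> i = J - 1 then 1 else 2)"
  have pw: "A_mat J $$ (i,l) * f l = (if l = i then c * f i else 0)
      + (if l = i - 1 then (if 0 < i then - f l else 0) else 0) + (if l = i + 1 then - f l else 0)"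
    if l: "l \<in> {0..<J}" for l
    using l i unfolding A_mat_def c_def by auto
  have "(\<Sum>l\<in>{0..<J}. A_mat J $$ (i,l) * f l) =
     (\<Sum>l\<in>{0..<J}. (if l = i then c * f i else 0)
      + (if l = i - 1 then (if 0 < i then - f l else 0) else 0) + (if l = i + 1 then - f l else 0))"
    by (rule sum.cong[OF refl pw])
  also have "\<dots> = c * f i + (if 0 < i then - f (i - 1) else 0) + (if i + 1 < J then - f (i + 1) else 0)"
    using i by (simp add: sum.distrib)
  finally show ?thesis using J i unfolding c_def by auto
qed

lemma dd_nz: "dd L i \<noteq> 0" unfolding dd_def by simp

definition gg :: "nat \<Rightarrow> nat \<Rightarrow> real" where
  "gg L j = (\<Prod>i<j. - dd L (Suc i))"

lemma gg_nz: "gg L j \<noteq> 0" unfolding gg_def using dd_nz by simp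

lemma gg_Suc: "gg L (Suc j) = gg L j * (- dd L (Suc j))" unfolding gg_def by simp

definition YY :: "nat \<Rightarrow> real \<Rightarrow> nat \<Rightarrow> real" where
  "YY L \<mu> j = (if j = 0 then 0 else poly (PP L (j - 1)) \<mu> / gg L (j - 1))"

lemma YY_id: "dd L (Suc i) * YY L \<mu> (Suc (Suc i)) = (dd L i + dd L (Suc i) - \<mu>) * YY L \<mu> (Suc i) - dd L i * YY L \<mu> i"
proof (cases i)
  case 0
  have "gg L 1 = - dd L 1" unfolding gg_def by simp
  then show ?thesis using 0 dd_nz[of L 1] unfolding YY_def aa_def gg_def
    by (simp add: field_simps)
next
  case (Suc m)
  define g0 where "g0 = gg L m"
  have g1: "gg L (Suc m) = g0 * (- dd L (Suc m))" unfolding g0_def by (rule gg_Suc)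
  have g2: "gg L (Suc (Suc m)) = g0 * (- dd L (Suc m)) * (- dd L (Suc (Suc m)))" using g1 gg_Suc by simp
  define P0 where "P0 = poly (PP L m) \<mu>"
  define P1 where "P1 = poly (PP L (Suc m)) \<mu>"
  have p2: "poly (PP L (Suc (Suc m))) \<mu> = (\<mu> - (dd L (Suc m) + dd L (Suc (Suc m)))) * P1 - (dd L (Suc m))^2 * P0"
    unfolding P0_def P1_def by (simp only: PP2) (simp add: aa_def bb_def)
  have y0: "YY L \<mu> (Suc m) = P0 / g0" unfolding YY_def P0_def g0_def by simp
  have y1: "YY L \<mu> (Suc (Suc m)) = P1 / (g0 * (- dd L (Suc m)))"
    using g1 unfolding YY_def P1_def by simp
  have y2: "YY L \<mu> (Suc (Suc (Suc m))) = ((\<mu> - (dd L (Suc m) + dd L (Suc (Suc m)))) * P1 - (dd L (Suc m))^2 * P0)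
      / (g0 * (- dd L (Suc m)) * (- dd L (Suc (Suc m))))"
    using g2 p2 unfolding YY_def by simp
  have nz: "g0 \<noteq> 0" "dd L (Suc m) \<noteq> 0" "dd L (Suc (Suc m)) \<noteq> 0" using gg_nz dd_nz unfolding g0_def by auto
  show ?thesis unfolding Suc y0 y1 y2 using nz
    by (simp add: field_simps power2_eq_square)
qed

lemma YY_0: "YY L \<mu> 0 = 0" unfolding YY_def by simp
lemma YY_1: "YY L \<mu> (Suc 0) = 1" unfolding YY_def gg_def by simp

lemma eig_root:
  assumes J: "5 \<le> J" and L: "2 \<le> L" "L \<le> J - 1" and root: "poly (PP L (J - 1)) \<mu> = 0"
  shows "eigenvalue (B_mat J L) \<mu>"
proof -
  let ?Y = "YY L \<mu>"
  let ?d = "dd L"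
  define v where "v = vec J (\<lambda>i. ?Y (Suc i) - ?Y i)"
  have YJ: "?Y J = 0" using root J unfolding YY_def by simp
  have v0: "v $ 0 = 1" using J unfolding v_def by (simp add: YY_0 YY_1)
  define f where "f l = ?d l * (?Y (Suc l) - ?Y l)" for l
  have row: "(B_mat J L *\<^sub>v v) $ i = \<mu> * v $ i" if i: "i < J" for i
  proof -
    have "(B_mat J L *\<^sub>v v) $ i = (\<Sum>l\<in>{0..<J}. B_mat J L $$ (i,l) * v $ l)"
      using i B_dims[of J L] by (simp add: scalar_prod_def v_def)
    also have "\<dots> = (\<Sum>l\<in>{0..<J}. A_mat J $$ (i,l) * f l)"
      using i by (intro sum.cong) (auto simp: B_entry v_def f_def)
    also have "\<dots> = (if i = 0 then f 0 - f 1 else if i = J - 1 then f i - f (i - 1) else 2 * f i - f (i - 1) - f (i + 1))"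
      using J i by (intro A_row_sum) auto
    also have "\<dots> = \<mu> * (?Y (Suc i) - ?Y i)"
    proof -
      consider "i = 0" | "i = J - 1" | "0 < i" "i < J - 1" using i by linarith
      then show ?thesis
      proof cases
        case 1
        have X: "?d (Suc 0) * ?Y (Suc (Suc 0)) = (?d 0 + ?d (Suc 0) - \<mu>) * ?Y (Suc 0) - ?d 0 * ?Y 0"
          by (rule YY_id)
        have "f 0 - f 1 - \<mu> * (?Y 1 - ?Y 0) = - (?d (Suc 0) * ?Y (Suc (Suc 0)) - ((?d 0 + ?d (Suc 0) - \<mu>) * ?Y (Suc 0) - ?d 0 * ?Y 0))"
          unfolding f_def by (simp add: algebra_simps YY_0)
        then show ?thesis using 1 X by simp
      next
        case 2
        define m where "m = i - 1"
        have m: "i = Suc m" using 2 J unfolding m_def by simp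
        have Ji: "J = Suc i" using 2 J by simp
        have X: "?d (Suc m) * ?Y (Suc (Suc m)) = (?d m + ?d (Suc m) - \<mu>) * ?Y (Suc m) - ?d m * ?Y m"
          by (rule YY_id)
        have "f i - f (i - 1) - \<mu> * (?Y (Suc i) - ?Y i) =
           (?d (Suc m) * ?Y (Suc (Suc m)) - ((?d m + ?d (Suc m) - \<mu>) * ?Y (Suc m) - ?d m * ?Y m)) - \<mu> * ?Y (Suc i)"
          unfolding f_def m by (simp add: algebra_simps)
        then show ?thesis using X YJ Ji m by simp
      next
        case 3
        define m where "m = i - 1"
        have m: "i = Suc m" using 3 unfolding m_def by simp
        have X1: "?d (Suc i) * ?Y (Suc (Suc i)) = (?d i + ?d (Suc i) - \<mu>) * ?Y (Suc i) - ?d i * ?Y i"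
          by (rule YY_id)
        have X2: "?d (Suc m) * ?Y (Suc (Suc m)) = (?d m + ?d (Suc m) - \<mu>) * ?Y (Suc m) - ?d m * ?Y m"
          by (rule YY_id)
        have "2 * f i - f (i - 1) - f (i + 1) - \<mu> * (?Y (Suc i) - ?Y i) =
           (?d (Suc m) * ?Y (Suc (Suc m)) - ((?d m + ?d (Suc m) - \<mu>) * ?Y (Suc m) - ?d m * ?Y m))
         - (?d (Suc i) * ?Y (Suc (Suc i)) - ((?d i + ?d (Suc i) - \<mu>) * ?Y (Suc i) - ?d i * ?Y i))"
          unfolding f_def m by (simp add: algebra_simps)
        then show ?thesis using 3 X1 X2 by simp
      qed
    qed
    also have "\<dots> = \<mu> * v $ i" using i unfolding v_def by simp
    finally show ?thesis .
  qed
  have "eigenvector (B_mat J L) v \<mu>"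
    unfolding eigenvector_def
  proof (intro conjI)
    show "v \<in> carrier_vec (dim_row (B_mat J L))" using B_dims[of J L] unfolding v_def by simp
    show "v \<noteq> 0\<^sub>v (dim_row (B_mat J L))"
    proof
      assume "v = 0\<^sub>v (dim_row (B_mat J L))"
      then have "v $ 0 = 0" using J B_dims[of J L] by simp
      then show False using v0 by simp
    qed
    show "B_mat J L *\<^sub>v v = \<mu> \<cdot>\<^sub>v v"
      by (rule eq_vecI) (use row B_dims[of J L] in \<open>auto simp: v_def\<close>)
  qed
  then show ?thesis unfolding eigenvalue_def by blast
qed

lemma eig_zero:
  assumes J: "5 \<le> J"
  shows "eigenvalue (B_mat J L) 0"
proof -
  define v where "v = vec J (\<lambda>i. 1 / dd L i)"
  have row: "(B_mat J L *\<^sub>v v) $ i = 0" if i: "i < J" for i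
  proof -
    have "(B_mat J L *\<^sub>v v) $ i = (\<Sum>l\<in>{0..<J}. B_mat J L $$ (i,l) * v $ l)"
      using i B_dims[of J L] by (simp add: scalar_prod_def v_def)
    also have "\<dots> = (\<Sum>l\<in>{0..<J}. A_mat J $$ (i,l) * (\<lambda>_. 1) l)"
      using i dd_nz by (intro sum.cong) (auto simp: B_entry v_def)
    also have "\<dots> = 0" using J i by (subst A_row_sum) auto
    finally show ?thesis .
  qed
  have "eigenvector (B_mat J L) v 0"
    unfolding eigenvector_def
  proof (intro conjI)
    show "v \<in> carrier_vec (dim_row (B_mat J L))" using B_dims[of J L] unfolding v_def by simp
    show "v \<noteq> 0\<^sub>v (dim_row (B_mat J L))"
    proof
      assume "v = 0\<^sub>v (dim_row (B_mat J L))"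
      then have "v $ 0 = 0" using J B_dims[of J L] by simp
      then show False using dd_nz[of L 0] J unfolding v_def by simp
    qed
    show "B_mat J L *\<^sub>v v = 0 \<cdot>\<^sub>v v"
      by (rule eq_vecI) (use row B_dims[of J L] in \<open>auto simp: v_def\<close>)
  qed
  then show ?thesis unfolding eigenvalue_def by blast
qed



lemma order_prod_lin:
  fixes R :: "real set"
  assumes "finite R"
  shows "order a (\<Prod>x\<in>R. [:-x, 1:]) = (if a \<in> R then 1 else 0)"
  using assms
proof (induction R rule: finite_induct)
  case empty
  then show ?case by (simp add: order_0I)
next
  case (insert y R)
  have fi: "finite (insert y R)" using insert by simp
  have nz: "(\<Prod>x\<in>insert y R. [:-x, 1:]) \<noteq> 0" by (simp only: prod_zero_iff[OF fi]) auto
  have "order a (\<Prod>x\<in>insert y R. [:-x, 1:]) = order a ([:-y, 1:] * (\<Prod>x\<in>R. [:-x, 1:]))"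
    using insert by simp
  also have "\<dots> = order a [:-y, 1:] + order a (\<Prod>x\<in>R. [:-x, 1:])"
    by (rule order_mult) (use nz insert in simp)
  also have "\<dots> = (if a \<in> insert y R then 1 else 0)"
  proof (cases "a = y")
    case True
    have "order a [:-y, 1:] = 1" using True order_power_n_n[of a 1] by simp
    then show ?thesis using True insert by simp
  next
    case False
    have "order a [:-y, 1:] = 0" using False by (intro order_0I) simp
    then show ?thesis using False insert by simp
  qed
  finally show ?case .
qed

lemma diag_from_simple:
  fixes A :: "real mat"
  assumes A: "A \<in> carrier_mat n n" and fin: "finite R"
    and cp: "char_poly A = (\<Prod>x\<in>R. [:-x, 1:])"
  shows "diagonalizable_real A"
proof -
  define es where "es = sorted_list_of_set R"
  have des: "distinct es" and ses: "set es = R" using fin unfolding es_def by auto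
  have "char_poly A = (\<Prod>a\<leftarrow>es. [:-a, 1:])"
    unfolding cp ses[symmetric] by (rule prod.distinct_set_conv_list[OF des])
  from jordan_nf_exists[OF A this] obtain n_as where jnf: "jordan_nf A n_as" by blast
  have one: "k = 1" if "(k, a) \<in> set n_as" for k a
  proof -
    have "k \<le> order a (char_poly A)" by (rule jordan_nf_block_size_order_bound[OF jnf that])
    also have "\<dots> \<le> 1" unfolding cp order_prod_lin[OF fin] by simp
    finally have "k \<le> 1" .
    moreover have "k \<noteq> 0" using jnf that unfolding jordan_nf_def by force
    ultimately show ?thesis by simp
  qed
  have jm: "jordan_matrix n_as = mk_diagonal (map snd n_as)"
  proof -
    have "map (\<lambda>(n, a). jordan_block n a) n_as = map (\<lambda>a. mat (Suc 0) (Suc 0) (\<lambda>_. a)) (map snd n_as)"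
    proof (rule nth_equalityI)
      fix i assume "i < length (map (\<lambda>(n, a). jordan_block n a) n_as)"
      then have i: "i < length n_as" by simp
      obtain k a where ka: "n_as ! i = (k, a)" by force
      then have "(k, a) \<in> set n_as" using i by (metis nth_mem)
      then have k: "k = 1" by (rule one)
      have "jordan_block 1 a = mat (Suc 0) (Suc 0) (\<lambda>_. a)"
        by (rule eq_matI) (auto simp: jordan_block_def)
      then show "map (\<lambda>(n, a). jordan_block n a) n_as ! i = map (\<lambda>a. mat (Suc 0) (Suc 0) (\<lambda>_. a)) (map snd n_as) ! i"
        using i ka k by simp
    qed simp
    then show ?thesis unfolding jordan_matrix_def mk_diagonal_def by (rule arg_cong)
  qed
  have sim: "similar_mat A (jordan_matrix n_as)" using jnf unfolding jordan_nf_def by blast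
  from similar_matD[OF sim] obtain m where "A \<in> carrier_mat m m" "jordan_matrix n_as \<in> carrier_mat m m" by auto
  then have car: "jordan_matrix n_as \<in> carrier_mat (dim_row A) (dim_row A)" by simp
  show ?thesis unfolding diagonalizable_real_def
    using car sim mk_diagonal_diagonal[of "map snd n_as"] jm by metis
qed

theorem proposition3p1:
  fixes J L :: nat
  assumes "J \<ge> 5" and "2 \<le> L" and "L \<le> J - 1"
  shows "diagonalizable_real (B_mat J L)
    \<and> (\<exists>\<mu> :: int \<Rightarrow> real.
          strict_mono_on {-1 .. int J - 2} \<mu>
        \<and> -1 < \<mu> (-1) \<and> \<mu> 0 = 0 \<and> \<mu> (int J - 2) < 8
        \<and> {k. eigenvalue (B_mat J L) k} = \<mu> ` {-1 .. int J - 2})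
    \<and> card {k. eigenvalue (B_mat J L) k \<and> k < 0} = 1"
proof -
  note J = assms(1) and L = assms(2) and LJ = assms(3)
  define n where "n = J - 1"
  have Jn: "J = Suc n" using J unfolding n_def by simp
  have Ln: "L \<le> n" and n3: "3 \<le> n" using LJ J unfolding n_def by auto
  obtain r where r: "rts (PP L n) n r" and rm1: "-1 < r 0" and r0: "r 0 < 0"
    and rpos: "\<And>i. 1 \<le> i \<Longrightarrow> i < n \<Longrightarrow> 0 < r i \<and> r i < 8"
    using roots_struct[OF L Ln n3] by blast
  have rstrict: "\<And>i j. i < j \<Longrightarrow> j < n \<Longrightarrow> r i < r j" using r unfolding rts_def by blast
  have rroot: "\<And>i. i < n \<Longrightarrow> poly (PP L n) (r i) = 0" using r unfolding rts_def by blast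
  let ?B = "B_mat J L"
  have Bc: "?B \<in> carrier_mat J J" by (rule B_dims)
  define R where "R = insert 0 (r ` {..<n})"
  have finR: "finite R" unfolding R_def by simp
  have 0: "0 \<notin> r ` {..<n}"
  proof
    assume "0 \<in> r ` {..<n}"
    then obtain i where i: "i < n" "r i = 0" by auto
    show False
    proof (cases "i = 0")
      case True then show False using i r0 by simp
    next
      case False then show False using i rpos[of i] by simp
    qed
  qed
  have cR: "card R = J"
    unfolding R_def using 0 rts_inj[OF r] Jn by (simp add: card_image)
  have RE: "R \<subseteq> {k. eigenvalue ?B k}"
  proof
    fix k assume "k \<in> R"
    then consider "k = 0" | i where "i < n" "k = r i" unfolding R_def by auto
    then show "k \<in> {k. eigenvalue ?B k}"
    proof cases
      case 1 then show ?thesis using eig_zero[OF J] by simp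
    next
      case 2
      then show ?thesis using eig_root[OF J L LJ] rroot[of i] unfolding n_def by simp
    qed
  qed
  have dcp: "degree (char_poly ?B) = J" and ccp: "coeff (char_poly ?B) J = 1"
    using degree_monic_char_poly[OF Bc] by auto
  have cpnz: "char_poly ?B \<noteq> 0" using ccp by auto
  have ER: "{k. eigenvalue ?B k} = {x. poly (char_poly ?B) x = 0}"
    using eigenvalue_root_char_poly[OF Bc] by auto
  have cE: "card {x. poly (char_poly ?B) x = 0} \<le> J"
    using card_poly_roots_bound[OF cpnz] dcp by simp
  have EV: "{k. eigenvalue ?B k} = R"
    using RE cE cR poly_roots_finite[OF cpnz] unfolding ER
    by (metis card_seteq)
  have rootsR: "{x. poly (char_poly ?B) x = 0} = R" using EV ER by simp
  have lc: "lead_coeff (char_poly ?B) = 1" using dcp ccp by simp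
  have "char_poly ?B = (\<Prod>x\<in>{x. poly (char_poly ?B) x = 0}. [:-x, 1:])"
    by (rule monic_prod[OF dcp lc]) (use rootsR cR in simp)
  then have cpR: "char_poly ?B = (\<Prod>x\<in>R. [:-x, 1:])" unfolding rootsR .
  have diag: "diagonalizable_real ?B" by (rule diag_from_simple[OF Bc finR cpR])
  define \<mu> :: "int \<Rightarrow> real" where "\<mu> i = (if i = -1 then r 0 else if i = 0 then 0 else r (nat i))" for i
  have mono: "strict_mono_on {-1 .. int J - 2} \<mu>"
  proof (rule strict_mono_onI)
    fix x y :: int assume x: "x \<in> {-1 .. int J - 2}" and y: "y \<in> {-1 .. int J - 2}" and xy: "x < y"
    have ny: "nat y < n" if "1 \<le> y" using y that Jn by auto
    show "\<mu> x < \<mu> y"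
    proof (cases "x = -1")
      case True
      then have "y = 0 \<or> 1 \<le> y" using xy by auto
      then show ?thesis
      proof
        assume "y = 0" then show ?thesis using True r0 unfolding \<mu>_def by simp
      next
        assume y1: "1 \<le> y"
        then have "0 < r (nat y)" using rpos[of "nat y"] ny by auto
        then show ?thesis using True r0 y1 unfolding \<mu>_def by simp
      qed
    next
      case False
      then have x0: "0 \<le> x" using x by auto
      show ?thesis
      proof (cases "x = 0")
        case True
        then have y1: "1 \<le> y" using xy by simp
        then have "0 < r (nat y)" using rpos[of "nat y"] ny by auto
        then show ?thesis using True y1 unfolding \<mu>_def by simp
      next
        case False
        then have x1: "1 \<le> x" using x0 by simp
        then have "r (nat x) < r (nat y)" using rstrict[of "nat x" "nat y"] ny xy by simp
        then show ?thesis using x1 xy unfolding \<mu>_def by simp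
      qed
    qed
  qed
  have m1: "-1 < \<mu> (-1)" using rm1 unfolding \<mu>_def by simp
  have m0: "\<mu> 0 = 0" unfolding \<mu>_def by simp
  have m8: "\<mu> (int J - 2) < 8"
  proof -
    have "nat (int J - 2) = n - 1" using Jn by simp
    moreover have "int J - 2 \<noteq> -1" "int J - 2 \<noteq> 0" using J by auto
    ultimately have "\<mu> (int J - 2) = r (n - 1)" unfolding \<mu>_def by simp
    then show ?thesis using rpos[of "n - 1"] n3 by simp
  qed
  have img: "R = \<mu> ` {-1 .. int J - 2}"
  proof
    show "R \<subseteq> \<mu> ` {-1 .. int J - 2}"
    proof
      fix k assume "k \<in> R"
      then consider "k = 0" | "k = r 0" | i where "1 \<le> i" "i < n" "k = r i" unfolding R_def
        by (metis imageE lessThan_iff insertE less_one not_less)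
      then show "k \<in> \<mu> ` {-1 .. int J - 2}"
      proof cases
        case 1
        then have "k = \<mu> 0" unfolding \<mu>_def by simp
        then show ?thesis using J by auto
      next
        case 2
        then have "k = \<mu> (-1)" unfolding \<mu>_def by simp
        then show ?thesis using J by auto
      next
        case 3
        then have "k = \<mu> (int i)" unfolding \<mu>_def by simp
        moreover have "int i \<in> {-1 .. int J - 2}" using 3 Jn by auto
        ultimately show ?thesis by blast
      qed
    qed
  next
    show "\<mu> ` {-1 .. int J - 2} \<subseteq> R"
    proof
      fix k assume "k \<in> \<mu> ` {-1 .. int J - 2}"
      then obtain i where i: "i \<in> {-1 .. int J - 2}" "k = \<mu> i" by auto
      show "k \<in> R"
      proof (cases "i = -1 \<or> i = 0")
        case True
        then show ?thesis using i n3 unfolding \<mu>_def R_def by auto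
      next
        case False
        then have "nat i < n" "k = r (nat i)" using i Jn unfolding \<mu>_def by auto
        then show ?thesis unfolding R_def by auto
      qed
    qed
  qed
  have neg: "{k. eigenvalue ?B k \<and> k < 0} = {r 0}"
  proof -
    have "{k. eigenvalue ?B k \<and> k < 0} = {k \<in> R. k < 0}" using EV by auto
    also have "\<dots> = {r 0}"
    proof
      show "{k \<in> R. k < 0} \<subseteq> {r 0}"
      proof
        fix k assume k: "k \<in> {k \<in> R. k < 0}"
        then obtain i where "i < n" "k = r i" unfolding R_def by auto
        then show "k \<in> {r 0}" using k rpos[of i] by (cases "i = 0") auto
      qed
      show "{r 0} \<subseteq> {k \<in> R. k < 0}" using r0 n3 unfolding R_def by auto
    qed
    finally show ?thesis .
  qed
  show ?thesis
    using diag mono m1 m0 m8 img EV neg by auto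
qed


end
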